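(* Let $\mathrm b$ be a profile, $C\ge 0$, $r>0$, and $n$ large enough that $\rho_n^\pm:=\tfrac12\pm\tfrac{r}{n^{1/3}}\in[1/4,3/4]$. With $$\Delta_n^{\mathrm b}(u):=\frac{L^{\mathrm b}[un^{2/3}]_n-L^{\mathrm b}[0]_n}{2^{3/2}n^{1/3}},\qquad B^{\pm}_n(u):=\frac{L^{\rho_n^\pm}[un^{2/3}]_n-L^{\rho_n^\pm}[0]_n-\mu_{\rho_n^\pm}un^{2/3}}{2^{3/2}n^{1/3}},\quad \mu_\rho=\frac{2\rho-1}{\rho(1-\rho)},$$ and $$E_n(r):=\left\{Z^{\rho_n^-}[Cn^{2/3}]_n\le Z^{\mathrm b}[0]_n\ \text{ and }\ Z^{\mathrm b}[Cn^{2/3}]_n\le Z^{\rho_n^+}[0]_n\right\},$$ on the event $E_n(r)$ one has, for every $\delta\in[0,C]$, $$W_{\Delta^{\mathrm b}_n}(\delta)\le\max\left\{W_{B^-_n}(\delta),W_{B^+_n}(\delta)\right\}+3\sqrt2\,\delta r,$$ where for a process $X$ on $[0,C]$, $W_X(\delta):=\sup\{|X(u)-X(v)|:u,v\in[0,C],\ |u-v|\le\delta\}$.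
   Context: Let $\omega=\{\omega_{i,j}:(i,j)\in\mathbb Z^2,\ i+j>0\}$ be i.i.d. exponential random variables with parameter $1$. Write $(i,j)\le(k,l)$ if $i\le k$ and $j\le l$. An up-right path from $\mathbf x$ to $\mathbf y$ is a sequence $\mathbf x=\mathbf x_0,\dots,\mathbf x_m=\mathbf y$ with increments in $\{(1,0),(0,1)\}$; its passage time is $\sum_{i=1}^m\omega_{\mathbf x_i}$ (starting point excluded). For $\mathbf x=(i,j)\le\mathbf y$ with $i+j\ge0$, $L(\mathbf x,\mathbf y)$ is the maximal passage time over up-right paths. Set $L_k(\mathbf x)=L((k,-k),\mathbf x)$, $C^{\mathbf x}=\{k\in\mathbb Z:(k,-k)\le\mathbf x\}$; for integer $k$, $[k]_n:=(n+k,n-k)$, for real $x$, $[x]_n:=[\lfloor x\rfloor]_n$. A profile is $\mathrm b:\mathbb Z\to\mathbb R\cup\{-\infty\}$ with $\mathrm b(0)=0$ (possibly random, independent of $\omega$); $L^{\mathrm b}(\mathbf x):=\max_{k\in C^{\mathbf x}}\{\mathrm b(k)+L_k(\mathbf x)\}$ and $Z^{\mathrm b}(\mathbf x)$ is the largest maximizing $k$. For $\rho\in(0,1)$ the stationary profile $\mathrm s_\rho$ is $\mathrm s_\rho(0)=0$, $\mathrm s_\rho(k)=\sum_{i=1}^k\zeta_i$ ($k>0$), $\mathrm s_\rho(k)=-\sum_{i=k+1}^0\zeta_i$ ($k<0$), with $\zeta_i$ i.i.d. copies of $E_1-E_2$, $E_1,E_2$ independent exponentials of rates $1-\rho$ and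 $\rho$, independent of $\omega$; $L^\rho:=L^{\mathrm s_\rho}$, $Z^\rho:=Z^{\mathrm s_\rho}$. All processes use the same $\omega$. *)

theory Defs
  imports "HOL-Analysis.Analysis"
begin

type_synonym pt = "int \<times> int"

definition ple :: "pt \<Rightarrow> pt \<Rightarrow> bool" where
  "ple x y \<longleftrightarrow> fst x \<le> fst y \<and> snd x \<le> snd y"

definition up_right_path :: "pt \<Rightarrow> pt \<Rightarrow> pt list \<Rightarrow> bool" where
  "up_right_path x y p \<longleftrightarrow> p \<noteq> [] \<and> hd p = x \<and> last p = y \<and>
     (\<forall>i. Suc i < length p \<longrightarrow>
        p ! Suc i = (fst (p ! i) + 1, snd (p ! i)) \<or> p ! Suc i = (fst (p ! i), snd (p ! i) + 1))"

definition passage :: "(pt \<Rightarrow> real) \<Rightarrow> pt list \<Rightarrow> real" where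
  "passage \<omega> p = sum_list (map \<omega> (tl p))"

definition LPP :: "(pt \<Rightarrow> real) \<Rightarrow> pt \<Rightarrow> pt \<Rightarrow> real" where
  "LPP \<omega> x y = Max {passage \<omega> p | p. up_right_path x y p}"

definition Lk :: "(pt \<Rightarrow> real) \<Rightarrow> int \<Rightarrow> pt \<Rightarrow> real" where
  "Lk \<omega> k x = LPP \<omega> (k, -k) x"

definition Cset :: "pt \<Rightarrow> int set" where
  "Cset x = {k. ple (k, -k) x}"

definition brk :: "int \<Rightarrow> nat \<Rightarrow> pt" where
  "brk k n = (int n + k, int n - k)"

definition brkr :: "real \<Rightarrow> nat \<Rightarrow> pt" where
  "brkr x n = brk \<lfloor>x\<rfloor> n"

definition is_profile :: "(int \<Rightarrow> ereal) \<Rightarrow> bool" where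
  "is_profile b \<longleftrightarrow> b 0 = 0 \<and> (\<forall>k. b k \<noteq> \<infinity>)"

definition Lb :: "(pt \<Rightarrow> real) \<Rightarrow> (int \<Rightarrow> ereal) \<Rightarrow> pt \<Rightarrow> ereal" where
  "Lb \<omega> b x = Max {b k + ereal (Lk \<omega> k x) | k. k \<in> Cset x}"

definition Zb :: "(pt \<Rightarrow> real) \<Rightarrow> (int \<Rightarrow> ereal) \<Rightarrow> pt \<Rightarrow> int" where
  "Zb \<omega> b x = Max {k \<in> Cset x. b k + ereal (Lk \<omega> k x) = Lb \<omega> b x}"

definition mu :: "real \<Rightarrow> real" where
  "mu \<rho> = (2 * \<rho> - 1) / (\<rho> * (1 - \<rho>))"

definition modcont :: "real \<Rightarrow> (real \<Rightarrow> real) \<Rightarrow> real \<Rightarrow> real" where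
  "modcont C X \<delta> = Sup {\<bar>X u - X v\<bar> | u v. u \<in> {0..C} \<and> v \<in> {0..C} \<and> \<bar>u - v\<bar> \<le> \<delta>}"

definition Delta_n :: "(pt \<Rightarrow> real) \<Rightarrow> (int \<Rightarrow> ereal) \<Rightarrow> nat \<Rightarrow> real \<Rightarrow> real" where
  "Delta_n \<omega> b n u =
     (real_of_ereal (Lb \<omega> b (brkr (u * real n powr (2/3)) n)) - real_of_ereal (Lb \<omega> b (brk 0 n)))
     / (2 powr (3/2) * real n powr (1/3))"

text \<open>B_n for a (realization of a) stationary profile s of parameter \<rho>.\<close>
definition B_n :: "(pt \<Rightarrow> real) \<Rightarrow> (int \<Rightarrow> real) \<Rightarrow> real \<Rightarrow> nat \<Rightarrow> real \<Rightarrow> real" where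
  "B_n \<omega> s \<rho> n u =
     (real_of_ereal (Lb \<omega> (\<lambda>k. ereal (s k)) (brkr (u * real n powr (2/3)) n))
      - real_of_ereal (Lb \<omega> (\<lambda>k. ereal (s k)) (brk 0 n))
      - mu \<rho> * u * real n powr (2/3))
     / (2 powr (3/2) * real n powr (1/3))"

end

theory Submission
  imports Defs
begin

lemma urp_step:
  assumes "up_right_path a b p" "Suc i < length p"
  shows "p ! Suc i = (fst (p ! i) + 1, snd (p ! i)) \<or> p ! Suc i = (fst (p ! i), snd (p ! i) + 1)"
  using assms unfolding up_right_path_def by blast

lemma urp_sum:
  assumes "up_right_path a b p" "i < length p"
  shows "fst (p!i) + snd (p!i) = fst a + snd a + int i"
  using assms(2)
proof (induction i)
  case 0 then show ?case using assms(1) by (auto simp: up_right_path_def hd_conv_nth)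
next
  case (Suc i)
  then show ?case using urp_step[OF assms(1) Suc.prems] by auto
qed

lemma urp_mono:
  assumes "up_right_path a b p" "i \<le> j" "j < length p"
  shows "ple (p!i) (p!j)"
  using assms(2,3)
proof (induction j)
  case 0 then show ?case by (simp add: ple_def)
next
  case (Suc j)
  show ?case
  proof (cases "i = Suc j")
    case True then show ?thesis by (simp add: ple_def)
  next
    case False
    then have "ple (p!i) (p!j)" using Suc by auto
    then show ?thesis using urp_step[OF assms(1) Suc.prems(2)] by (auto simp: ple_def)
  qed
qed

lemma urp_ends:
  assumes "up_right_path a b p"
  shows "p \<noteq> []" "p!0 = a" "p!(length p - 1) = b"
  using assms by (auto simp: up_right_path_def hd_conv_nth last_conv_nth)

lemma urp_box:
  assumes "up_right_path a b p"
  shows "set p \<subseteq> {fst a..fst b} \<times> {snd a..snd b}"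
proof
  fix x assume "x \<in> set p"
  then obtain i where i: "i < length p" "x = p!i" by (auto simp: in_set_conv_nth)
  have "ple (p!0) (p!i)" "ple (p!i) (p!(length p - 1))"
    using urp_mono[OF assms] i by auto
  then show "x \<in> {fst a..fst b} \<times> {snd a..snd b}"
    using urp_ends[OF assms] i by (auto simp: ple_def mem_Times_iff)
qed

lemma urp_length:
  assumes "up_right_path a b p"
  shows "int (length p) = fst b + snd b - fst a - snd a + 1"
proof -
  have "length p - 1 < length p" using urp_ends(1)[OF assms] by simp
  from urp_sum[OF assms this] urp_ends[OF assms] show ?thesis
    by (cases "length p") auto
qed

lemma urp_finite: "finite {p. up_right_path a b p}"
proof (rule finite_subset)
  show "{p. up_right_path a b p} \<subseteq> {xs. set xs \<subseteq> {fst a..fst b} \<times> {snd a..snd b}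
          \<and> length xs = nat (fst b + snd b - fst a - snd a + 1)}"
    using urp_box urp_length by fastforce
  show "finite \<dots>" by (rule finite_lists_length_eq) auto
qed

lemma urp_Cons:
  assumes "up_right_path a' b p" "a' = (fst a + 1, snd a) \<or> a' = (fst a, snd a + 1)"
  shows "up_right_path a b (a # p)"
  unfolding up_right_path_def
proof (intro conjI allI impI)
  show "a # p \<noteq> []" "hd (a # p) = a" by auto
  show "last (a # p) = b" using assms(1) by (auto simp: up_right_path_def)
  fix i assume i: "Suc i < length (a # p)"
  show "(a # p) ! Suc i = (fst ((a # p) ! i) + 1, snd ((a # p) ! i)) \<or>
        (a # p) ! Suc i = (fst ((a # p) ! i), snd ((a # p) ! i) + 1)"
  proof (cases i)
    case 0 then show ?thesis using assms urp_ends(2)[OF assms(1)] by auto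
  next
    case (Suc j) then show ?thesis using urp_step[OF assms(1), of j] i by auto
  qed
qed

lemma urp_exists:
  assumes "ple a b" shows "\<exists>p. up_right_path a b p"
proof -
  have "\<And>a. ple a b \<Longrightarrow> nat (fst b - fst a + snd b - snd a) = m \<Longrightarrow> \<exists>p. up_right_path a b p" for m
  proof (induction m)
    case 0
    then have "a = b" by (cases a, cases b) (auto simp: ple_def)
    then show ?case by (intro exI[of _ "[a]"]) (auto simp: up_right_path_def)
  next
    case (Suc m)
    show ?case
    proof (cases "fst a < fst b")
      case True
      let ?a = "(fst a + 1, snd a)"
      have "ple ?a b" "nat (fst b - fst ?a + snd b - snd ?a) = m" using Suc.prems True by (auto simp: ple_def)
      then obtain p where "up_right_path ?a b p" using Suc.IH by blast
      then show ?thesis using urp_Cons by blast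
    next
      case False
      let ?a = "(fst a, snd a + 1)"
      have "ple ?a b" "nat (fst b - fst ?a + snd b - snd ?a) = m" using Suc.prems False by (auto simp: ple_def)
      then obtain p where "up_right_path ?a b p" using Suc.IH by blast
      then show ?thesis using urp_Cons by blast
    qed
  qed
  then show ?thesis using assms by blast
qed

lemma LPP_set: "{passage \<omega> p | p. up_right_path a b p} = passage \<omega> ` {p. up_right_path a b p}"
  by auto

lemma LPP_ge: "up_right_path a b p \<Longrightarrow> passage \<omega> p \<le> LPP \<omega> a b"
  unfolding LPP_def LPP_set by (rule Max_ge) (auto intro: finite_imageI urp_finite)

lemma LPP_attained:
  assumes "ple a b" shows "\<exists>p. up_right_path a b p \<and> passage \<omega> p = LPP \<omega> a b"
proof -
  have "LPP \<omega> a b \<in> passage \<omega> ` {p. up_right_path a b p}"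
    unfolding LPP_def LPP_set using urp_exists[OF assms]
    by (intro Max_in) (auto intro: finite_imageI urp_finite)
  then show ?thesis by auto
qed

lemma passage_append: "xs \<noteq> [] \<Longrightarrow> passage \<omega> (xs @ ys) = passage \<omega> xs + sum_list (map \<omega> ys)"
  by (simp add: passage_def)

lemma urp_splice:
  assumes p: "up_right_path a x p" and q: "up_right_path a' y q"
    and t: "t < length p" "t < length q" and eq: "q!t = p!t"
  shows "up_right_path a' x (take (Suc t) q @ drop (Suc t) p)"
proof -
  let ?r = "take (Suc t) q @ drop (Suc t) p"
  have len: "length ?r = length p" using t by auto
  have nth: "\<And>i. i < length p \<Longrightarrow> ?r ! i = (if i \<le> t then q!i else p!i)"
  proof -
    fix i assume "i < length p"
    have lt: "length (take (Suc t) q) = Suc t" using t by simp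
    show "?r ! i = (if i \<le> t then q!i else p!i)"
      using \<open>i < length p\<close> t by (auto simp: nth_append lt)
  qed
  have pne: "p \<noteq> []" using t by auto
  show ?thesis
    unfolding up_right_path_def
  proof (intro conjI allI impI)
    show rne: "?r \<noteq> []" using len pne by auto
    show "hd ?r = a'" using t urp_ends(2)[OF q] by (cases q) auto
    have "last ?r = ?r ! (length p - 1)" using last_conv_nth[OF rne] len by simp
    also have "\<dots> = p ! (length p - 1)" using nth[of "length p - 1"] pne eq t
    proof (cases "length p - 1 \<le> t")
      case True then have "length p - 1 = t" using t by linarith
      then show ?thesis using nth[of "length p - 1"] pne eq t by simp
    qed auto
    finally show "last ?r = x" using urp_ends(3)[OF p] by simp
    fix i assume i: "Suc i < length ?r"
    show "?r ! Suc i = (fst (?r ! i) + 1, snd (?r ! i)) \<or> ?r ! Suc i = (fst (?r ! i), snd (?r ! i) + 1)"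
    proof (cases "Suc i \<le> t")
      case True then show ?thesis using nth[of i] nth[of "Suc i"] i len urp_step[OF q, of i] t by auto
    next
      case False then show ?thesis using nth[of i] nth[of "Suc i"] i len urp_step[OF p, of i] eq
        by (cases "i = t") auto
    qed
  qed
qed

lemma dIVT:
  fixes d :: "nat \<Rightarrow> int"
  assumes "d 0 \<le> 0" "d N \<ge> 0" "\<forall>i<N. d (Suc i) \<le> d i + 1"
  shows "\<exists>t\<le>N. d t = 0"
  using assms(2,3)
proof (induction N)
  case 0 then show ?case using assms(1) by auto
next
  case (Suc N)
  show ?case
  proof (cases "d N \<ge> 0")
    case True then show ?thesis using Suc by (metis le_SucI less_SucI)
  next
    case False then show ?thesis using Suc.prems by (intro exI[of _ "Suc N"]) force
  qed
qed


lemma quad: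
  fixes n :: nat and k l z1 z2 :: int
  assumes z: "z2 \<le> z1" and kl: "k \<le> l"
    and h1: "ple (z1,-z1) (brk k n)" and h2: "ple (z2,-z2) (brk l n)"
  shows "Lk \<omega> z1 (brk k n) + Lk \<omega> z2 (brk l n) \<le> Lk \<omega> z1 (brk l n) + Lk \<omega> z2 (brk k n)"
proof -
  obtain p where p: "up_right_path (z1,-z1) (brk k n) p" "passage \<omega> p = LPP \<omega> (z1,-z1) (brk k n)"
    using LPP_attained[OF h1] by blast
  obtain q where q: "up_right_path (z2,-z2) (brk l n) q" "passage \<omega> q = LPP \<omega> (z2,-z2) (brk l n)"
    using LPP_attained[OF h2] by blast
  have lp: "length p = 2*n+1" using urp_length[OF p(1)] by (simp add: brk_def)
  have lq: "length q = 2*n+1" using urp_length[OF q(1)] by (simp add: brk_def)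
  define d where "d i = fst (q!i) - fst (p!i)" for i
  have d0: "d 0 \<le> 0" using urp_ends(2)[OF p(1)] urp_ends(2)[OF q(1)] z by (simp add: d_def)
  have dN: "d (2*n) \<ge> 0" using urp_ends(3)[OF p(1)] urp_ends(3)[OF q(1)] lp lq kl
    by (simp add: d_def brk_def)
  have dS: "\<forall>i<2*n. d (Suc i) \<le> d i + 1"
  proof (intro allI impI)
    fix i assume "i < 2*n"
    then have "Suc i < length p" "Suc i < length q" using lp lq by auto
    from urp_step[OF p(1) this(1)] urp_step[OF q(1) this(2)]
    show "d (Suc i) \<le> d i + 1" by (auto simp: d_def)
  qed
  obtain t where t: "t \<le> 2*n" "d t = 0" using dIVT[OF d0 dN dS] by blast
  have tl: "t < length p" "t < length q" using t lp lq by auto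
  have eq: "q!t = p!t"
  proof -
    have "fst (q!t) = fst (p!t)" using t by (simp add: d_def)
    moreover have "snd (q!t) = snd (p!t)"
      using urp_sum[OF p(1) tl(1)] urp_sum[OF q(1) tl(2)] calculation by simp
    ultimately show ?thesis by (simp add: prod_eq_iff)
  qed
  have r1: "up_right_path (z2,-z2) (brk k n) (take (Suc t) q @ drop (Suc t) p)"
    by (rule urp_splice[OF p(1) q(1) tl eq])
  have r2: "up_right_path (z1,-z1) (brk l n) (take (Suc t) p @ drop (Suc t) q)"
    by (rule urp_splice[OF q(1) p(1) tl(2,1) eq[symmetric]])
  have ne: "take (Suc t) p \<noteq> []" "take (Suc t) q \<noteq> []" using tl by auto
  have pp: "passage \<omega> p = passage \<omega> (take (Suc t) p) + sum_list (map \<omega> (drop (Suc t) p))"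
    using passage_append[OF ne(1), of \<omega> "drop (Suc t) p"] by simp
  have qq: "passage \<omega> q = passage \<omega> (take (Suc t) q) + sum_list (map \<omega> (drop (Suc t) q))"
    using passage_append[OF ne(2), of \<omega> "drop (Suc t) q"] by simp
  have "passage \<omega> (take (Suc t) q @ drop (Suc t) p) \<le> LPP \<omega> (z2,-z2) (brk k n)" by (rule LPP_ge[OF r1])
  moreover have "passage \<omega> (take (Suc t) p @ drop (Suc t) q) \<le> LPP \<omega> (z1,-z1) (brk l n)" by (rule LPP_ge[OF r2])
  ultimately show ?thesis using p(2) q(2) pp qq passage_append[OF ne(1), of \<omega> "drop (Suc t) q"] passage_append[OF ne(2), of \<omega> "drop (Suc t) p"]
    unfolding Lk_def by linarith
qed

lemma Cset_brk: "Cset (brk k n) = {k - int n .. k + int n}"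
  unfolding Cset_def ple_def brk_def by auto

lemma Cset_brk_fin: "finite (Cset (brk k n))" "Cset (brk k n) \<noteq> {}"
  unfolding Cset_brk by auto

lemma Lb_set: "{f k + ereal (Lk \<omega> k x) | k. k \<in> Cset x} = (\<lambda>k. f k + ereal (Lk \<omega> k x)) ` Cset x"
  by auto

lemma Lb_ge: "finite (Cset x) \<Longrightarrow> k \<in> Cset x \<Longrightarrow> f k + ereal (Lk \<omega> k x) \<le> Lb \<omega> f x"
  unfolding Lb_def Lb_set by (rule Max_ge) auto

lemma Lb_in: "finite (Cset x) \<Longrightarrow> Cset x \<noteq> {} \<Longrightarrow> \<exists>k\<in>Cset x. f k + ereal (Lk \<omega> k x) = Lb \<omega> f x"
proof -
  assume "finite (Cset x)" "Cset x \<noteq> {}"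
  then have "Lb \<omega> f x \<in> (\<lambda>k. f k + ereal (Lk \<omega> k x)) ` Cset x"
    unfolding Lb_def Lb_set by (intro Max_in) auto
  then show ?thesis by force
qed

lemma Zb_props:
  assumes "finite (Cset x)" "Cset x \<noteq> {}"
  shows "Zb \<omega> f x \<in> Cset x" "f (Zb \<omega> f x) + ereal (Lk \<omega> (Zb \<omega> f x) x) = Lb \<omega> f x"
proof -
  have "Zb \<omega> f x \<in> {k \<in> Cset x. f k + ereal (Lk \<omega> k x) = Lb \<omega> f x}"
    unfolding Zb_def using Lb_in[OF assms, of f \<omega>] assms(1) by (intro Max_in) auto
  then show "Zb \<omega> f x \<in> Cset x" "f (Zb \<omega> f x) + ereal (Lk \<omega> (Zb \<omega> f x) x) = Lb \<omega> f x" by auto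
qed

lemma Zb_max:
  assumes "finite (Cset x)" "k \<in> Cset x" "f k + ereal (Lk \<omega> k x) = Lb \<omega> f x"
  shows "k \<le> Zb \<omega> f x"
  unfolding Zb_def using assms by (intro Max_ge) auto

lemma Lb_not_inf:
  assumes "\<forall>j. f j \<noteq> \<infinity>" shows "Lb \<omega> f (brk k n) \<noteq> \<infinity>"
  using Lb_in[where f=f and \<omega>=\<omega> and x="brk k n", OF Cset_brk_fin] assms by auto

lemma ereal_fin:
  assumes "f \<noteq> \<infinity>" "f + ereal a = L" "L \<noteq> -\<infinity>"
  shows "f = ereal (real_of_ereal f)"
  using assms by (cases f) auto

lemma ereal_le_real:
  assumes "ereal a \<le> X" "X \<noteq> \<infinity>" shows "a \<le> real_of_ereal X"
  using assms by (cases X) auto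

lemma compare:
  assumes f: "\<forall>j. f j \<noteq> \<infinity>" and g: "\<forall>j. g j \<noteq> \<infinity>" and kl: "k \<le> l"
    and fx: "Lb \<omega> f (brk k n) \<noteq> -\<infinity>" and gy: "Lb \<omega> g (brk l n) \<noteq> -\<infinity>"
    and Z: "Zb \<omega> g (brk l n) \<le> Zb \<omega> f (brk k n)"
  shows "real_of_ereal (Lb \<omega> g (brk l n)) - real_of_ereal (Lb \<omega> g (brk k n))
       \<le> real_of_ereal (Lb \<omega> f (brk l n)) - real_of_ereal (Lb \<omega> f (brk k n))"
proof -
  define z1 where "z1 = Zb \<omega> f (brk k n)"
  define z2 where "z2 = Zb \<omega> g (brk l n)"
  have z1: "z1 \<in> Cset (brk k n)" "f z1 + ereal (Lk \<omega> z1 (brk k n)) = Lb \<omega> f (brk k n)"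
    using Zb_props[OF Cset_brk_fin] unfolding z1_def by auto
  have z2: "z2 \<in> Cset (brk l n)" "g z2 + ereal (Lk \<omega> z2 (brk l n)) = Lb \<omega> g (brk l n)"
    using Zb_props[OF Cset_brk_fin] unfolding z2_def by auto
  obtain F1 where F1: "f z1 = ereal F1" using ereal_fin[OF _ z1(2) fx] f by blast
  obtain G2 where G2: "g z2 = ereal G2" using ereal_fin[OF _ z2(2) gy] g by blast
  have zz: "z2 \<le> z1" using Z unfolding z1_def z2_def .
  have z1y: "z1 \<in> Cset (brk l n)" and z2x: "z2 \<in> Cset (brk k n)"
    using z1(1) z2(1) zz kl unfolding Cset_brk by auto
  have a: "F1 + Lk \<omega> z1 (brk l n) \<le> real_of_ereal (Lb \<omega> f (brk l n))"
    using Lb_ge[OF Cset_brk_fin(1) z1y, of f \<omega>] F1 Lb_not_inf[OF f]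
    by (intro ereal_le_real) auto
  have b: "G2 + Lk \<omega> z2 (brk k n) \<le> real_of_ereal (Lb \<omega> g (brk k n))"
    using Lb_ge[OF Cset_brk_fin(1) z2x, of g \<omega>] G2 Lb_not_inf[OF g]
    by (intro ereal_le_real) auto
  have c: "real_of_ereal (Lb \<omega> f (brk k n)) = F1 + Lk \<omega> z1 (brk k n)"
    using z1(2) F1 by (metis plus_ereal.simps(1) real_of_ereal.simps(1))
  have d: "real_of_ereal (Lb \<omega> g (brk l n)) = G2 + Lk \<omega> z2 (brk l n)"
    using z2(2) G2 by (metis plus_ereal.simps(1) real_of_ereal.simps(1))
  have q: "Lk \<omega> z1 (brk k n) + Lk \<omega> z2 (brk l n) \<le> Lk \<omega> z1 (brk l n) + Lk \<omega> z2 (brk k n)"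
    using quad[OF zz kl] z1(1) z2(1) unfolding Cset_def by auto
  show ?thesis using a b c d q by linarith
qed

lemma Z_mono:
  assumes f: "\<forall>j. f j \<noteq> \<infinity>" and kl: "k \<le> l"
    and fx: "Lb \<omega> f (brk k n) \<noteq> -\<infinity>" and fy: "Lb \<omega> f (brk l n) \<noteq> -\<infinity>"
  shows "Zb \<omega> f (brk k n) \<le> Zb \<omega> f (brk l n)"
proof (rule ccontr)
  define z1 where "z1 = Zb \<omega> f (brk k n)"
  define z2 where "z2 = Zb \<omega> f (brk l n)"
  assume "\<not> Zb \<omega> f (brk k n) \<le> Zb \<omega> f (brk l n)"
  then have zz: "z2 < z1" unfolding z1_def z2_def by simp
  have z1: "z1 \<in> Cset (brk k n)" "f z1 + ereal (Lk \<omega> z1 (brk k n)) = Lb \<omega> f (brk k n)"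
    using Zb_props[OF Cset_brk_fin] unfolding z1_def by auto
  have z2: "z2 \<in> Cset (brk l n)" "f z2 + ereal (Lk \<omega> z2 (brk l n)) = Lb \<omega> f (brk l n)"
    using Zb_props[OF Cset_brk_fin] unfolding z2_def by auto
  obtain F1 where F1: "f z1 = ereal F1" using ereal_fin[OF _ z1(2) fx] f by blast
  obtain F2 where F2: "f z2 = ereal F2" using ereal_fin[OF _ z2(2) fy] f by blast
  have z1y: "z1 \<in> Cset (brk l n)" and z2x: "z2 \<in> Cset (brk k n)"
    using z1(1) z2(1) zz kl unfolding Cset_brk by auto
  have b: "ereal (F2 + Lk \<omega> z2 (brk k n)) \<le> ereal (F1 + Lk \<omega> z1 (brk k n))"
    using Lb_ge[OF Cset_brk_fin(1) z2x, of f \<omega>] F2 F1 z1(2) by simp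
  have q: "Lk \<omega> z1 (brk k n) + Lk \<omega> z2 (brk l n) \<le> Lk \<omega> z1 (brk l n) + Lk \<omega> z2 (brk k n)"
    using quad[of z2 z1 k l] zz kl z1(1) z2(1) unfolding Cset_def by auto
  have "ereal (F2 + Lk \<omega> z2 (brk l n)) \<le> ereal (F1 + Lk \<omega> z1 (brk l n))"
    using b q by simp
  moreover have "Lb \<omega> f (brk l n) = ereal (F2 + Lk \<omega> z2 (brk l n))" using z2(2) F2 by simp
  moreover have "f z1 + ereal (Lk \<omega> z1 (brk l n)) = ereal (F1 + Lk \<omega> z1 (brk l n))" using F1 by simp
  ultimately have "Lb \<omega> f (brk l n) \<le> f z1 + ereal (Lk \<omega> z1 (brk l n))"
    by simp
  moreover have "f z1 + ereal (Lk \<omega> z1 (brk l n)) \<le> Lb \<omega> f (brk l n)"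
    using Lb_ge[OF Cset_brk_fin(1) z1y] .
  ultimately have "z1 \<le> z2" unfolding z2_def
    by (intro Zb_max[OF Cset_brk_fin(1) z1y]) auto
  then show False using zz by simp
qed


lemma mu_bound:
  assumes "\<rho> \<in> {1/4..3/4}" shows "\<bar>mu \<rho>\<bar> \<le> 32/3 * \<bar>\<rho> - 1/2\<bar>"
proof -
  have r: "1/4 \<le> \<rho>" "\<rho> \<le> 3/4" using assms by auto
  have pos: "\<rho> * (1 - \<rho>) \<ge> 3/16"
  proof -
    have "(\<rho> - 1/4) * (3/4 - \<rho>) \<ge> 0" using r by (intro mult_nonneg_nonneg) auto
    moreover have "\<rho> * (1 - \<rho>) - 3/16 = (\<rho> - 1/4) * (3/4 - \<rho>)" by (simp add: field_simps)
    ultimately show ?thesis by linarith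
  qed
  have "\<bar>mu \<rho>\<bar> = \<bar>2*\<rho> - 1\<bar> / (\<rho> * (1 - \<rho>))" using pos by (simp add: mu_def abs_divide)
  also have "\<dots> \<le> \<bar>2*\<rho> - 1\<bar> / (3/16)" using pos by (intro divide_left_mono) auto
  also have "\<dots> = 32/3 * \<bar>\<rho> - 1/2\<bar>" by (simp add: abs_if)
  finally show ?thesis .
qed

lemma mu_scale:
  fixes m r s2 M :: real
  assumes m: "m > 0" and s2: "s2 = 2 * sqrt 2" and M: "\<bar>M\<bar> \<le> 32/3 * (r/m)" and r: "r > 0"
  shows "\<bar>M\<bar> * (m*m) / (s2*m) \<le> 3 * sqrt 2 * r"
proof -
  have sp: "s2 > 0" using s2 by simp
  have a: "\<bar>M\<bar> * m \<le> 32/3 * r" using M m by (simp add: field_simps)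
  have "\<bar>M\<bar> * (m*m) / (s2*m) = \<bar>M\<bar> * m / s2" using m by simp
  also have "\<dots> \<le> (32/3 * r) / s2" using a sp by (intro divide_right_mono) auto
  also have "\<dots> \<le> 3 * sqrt 2 * r"
  proof -
    have "3 * sqrt 2 * r * s2 = 12 * r" using s2 by (simp add: algebra_simps)
    then show ?thesis using sp r by (simp only: pos_divide_le_eq[OF sp]; linarith)
  qed
  finally show ?thesis .
qed

lemma mod_bdd:
  fixes X :: "real \<Rightarrow> real" and M C \<delta> :: real
  assumes "\<forall>u\<in>{0..C}. \<bar>X u\<bar> \<le> M"
  shows "bdd_above {\<bar>X u - X v\<bar> | u v. u \<in> {0..C} \<and> v \<in> {0..C} \<and> \<bar>u - v\<bar> \<le> \<delta>}"
proof (rule bdd_aboveI[of _ "2*M"])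
  fix x assume "x \<in> {\<bar>X u - X v\<bar> | u v. u \<in> {0..C} \<and> v \<in> {0..C} \<and> \<bar>u - v\<bar> \<le> \<delta>}"
  then obtain u v where "x = \<bar>X u - X v\<bar>" "u \<in> {0..C}" "v \<in> {0..C}" by blast
  moreover have "\<bar>X u\<bar> \<le> M" "\<bar>X v\<bar> \<le> M" using assms calculation by auto
  ultimately show "x \<le> 2*M" using abs_triangle_ineq4[of "X u" "X v"] by linarith
qed

lemma B_bdd:
  fixes g :: "int \<Rightarrow> real" and N c C a \<mu> :: real
  assumes "N \<ge> 0" "c > 0" "C \<ge> 0"
  shows "\<exists>M. \<forall>u\<in>{0..C}. \<bar>(g \<lfloor>u*N\<rfloor> - a - \<mu>*u*N)/c\<bar> \<le> M"
proof -
  define T where "T = Max ((\<lambda>j. \<bar>g j\<bar>) ` {0..\<lfloor>C*N\<rfloor>})"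
  have "\<forall>u\<in>{0..C}. \<bar>(g \<lfloor>u*N\<rfloor> - a - \<mu>*u*N)/c\<bar> \<le> (T + \<bar>a\<bar> + \<bar>\<mu>\<bar>*C*N)/c"
  proof
    fix u assume u: "u \<in> {0..C}"
    have "\<lfloor>u*N\<rfloor> \<in> {0..\<lfloor>C*N\<rfloor>}" using u assms
      by (auto intro!: floor_mono mult_right_mono)
    then have t: "\<bar>g \<lfloor>u*N\<rfloor>\<bar> \<le> T" unfolding T_def by (intro Max_ge) auto
    have m: "\<bar>\<mu>*u*N\<bar> \<le> \<bar>\<mu>\<bar>*C*N" using u assms
      by (auto simp: abs_mult intro!: mult_mono mult_left_mono)
    have "\<bar>g \<lfloor>u*N\<rfloor> - a - \<mu>*u*N\<bar> \<le> T + \<bar>a\<bar> + \<bar>\<mu>\<bar>*C*N" using t m by linarith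
    then show "\<bar>(g \<lfloor>u*N\<rfloor> - a - \<mu>*u*N)/c\<bar> \<le> (T + \<bar>a\<bar> + \<bar>\<mu>\<bar>*C*N)/c"
      using assms by (simp add: abs_divide divide_right_mono)
  qed
  then show ?thesis by blast
qed


lemma sup_combine:
  fixes D Bm Bp :: "real \<Rightarrow> real" and C \<delta> Kc :: real
  assumes bm: "bdd_above {\<bar>Bm u - Bm v\<bar> | u v. u \<in> {0..C} \<and> v \<in> {0..C} \<and> \<bar>u - v\<bar> \<le> \<delta>}"
    and bp: "bdd_above {\<bar>Bp u - Bp v\<bar> | u v. u \<in> {0..C} \<and> v \<in> {0..C} \<and> \<bar>u - v\<bar> \<le> \<delta>}"
    and K: "\<And>u v. u \<in> {0..C} \<Longrightarrow> v \<in> {0..C} \<Longrightarrow>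
      \<bar>D u - D v\<bar> \<le> max \<bar>Bm u - Bm v\<bar> \<bar>Bp u - Bp v\<bar> + Kc * \<bar>u - v\<bar>"
    and Kc: "Kc \<ge> 0" and d: "\<delta> \<in> {0..C}"
  shows "modcont C D \<delta> \<le> max (modcont C Bm \<delta>) (modcont C Bp \<delta>) + Kc * \<delta>"
  unfolding modcont_def
proof (rule cSup_least)
  show "{\<bar>D u - D v\<bar> | u v. u \<in> {0..C} \<and> v \<in> {0..C} \<and> \<bar>u - v\<bar> \<le> \<delta>} \<noteq> {}"
    using d by (auto intro!: exI[of _ 0])
next
  fix x assume "x \<in> {\<bar>D u - D v\<bar> | u v. u \<in> {0..C} \<and> v \<in> {0..C} \<and> \<bar>u - v\<bar> \<le> \<delta>}"
  then obtain u v where x: "x = \<bar>D u - D v\<bar>" and u: "u \<in> {0..C}" and v: "v \<in> {0..C}"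
    and uvd: "\<bar>u - v\<bar> \<le> \<delta>" by blast
  have sm: "\<bar>Bm u - Bm v\<bar> \<le> Sup {\<bar>Bm u - Bm v\<bar> | u v. u \<in> {0..C} \<and> v \<in> {0..C} \<and> \<bar>u - v\<bar> \<le> \<delta>}"
    using u v uvd by (intro cSup_upper[OF _ bm]) blast
  have sp: "\<bar>Bp u - Bp v\<bar> \<le> Sup {\<bar>Bp u - Bp v\<bar> | u v. u \<in> {0..C} \<and> v \<in> {0..C} \<and> \<bar>u - v\<bar> \<le> \<delta>}"
    using u v uvd by (intro cSup_upper[OF _ bp]) blast
  have "Kc * \<bar>u - v\<bar> \<le> Kc * \<delta>" using uvd Kc by (rule mult_left_mono)
  moreover have "max \<bar>Bm u - Bm v\<bar> \<bar>Bp u - Bp v\<bar> \<le> max (Sup {\<bar>Bm u - Bm v\<bar> | u v. u \<in> {0..C} \<and> v \<in> {0..C} \<and> \<bar>u - v\<bar> \<le> \<delta>})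
         (Sup {\<bar>Bp u - Bp v\<bar> | u v. u \<in> {0..C} \<and> v \<in> {0..C} \<and> \<bar>u - v\<bar> \<le> \<delta>})"
    using sm sp by (rule max.mono)
  ultimately show "x \<le> max (Sup {\<bar>Bm u - Bm v\<bar> | u v. u \<in> {0..C} \<and> v \<in> {0..C} \<and> \<bar>u - v\<bar> \<le> \<delta>})
         (Sup {\<bar>Bp u - Bp v\<bar> | u v. u \<in> {0..C} \<and> v \<in> {0..C} \<and> \<bar>u - v\<bar> \<le> \<delta>}) + Kc * \<delta>"
    using x K[OF u v] by linarith
qed

theorem corollary1:
  fixes \<omega> :: "int \<times> int \<Rightarrow> real"
    and b :: "int \<Rightarrow> ereal"
    and sm sp :: "int \<Rightarrow> real"
    and C r \<delta> :: real
    and n :: nat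
  assumes \<omega>_pos: "\<And>i j. i + j > 0 \<Longrightarrow> \<omega> (i, j) > 0"
    and b: "is_profile b"
    and sm0: "sm 0 = 0" and sp0: "sp 0 = 0"
    and C: "C \<ge> 0" and r: "r > 0" and n: "n \<ge> 1"
    and rm: "1/2 - r / real n powr (1/3) \<in> {1/4..3/4}"
    and rp: "1/2 + r / real n powr (1/3) \<in> {1/4..3/4}"
    and E: "Zb \<omega> (\<lambda>k. ereal (sm k)) (brkr (C * real n powr (2/3)) n) \<le> Zb \<omega> b (brk 0 n)
            \<and> Zb \<omega> b (brkr (C * real n powr (2/3)) n) \<le> Zb \<omega> (\<lambda>k. ereal (sp k)) (brk 0 n)"
    and \<delta>: "\<delta> \<in> {0..C}"
  shows "modcont C (Delta_n \<omega> b n) \<delta>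
         \<le> max (modcont C (B_n \<omega> sm (1/2 - r / real n powr (1/3)) n) \<delta>)
               (modcont C (B_n \<omega> sp (1/2 + r / real n powr (1/3)) n) \<delta>)
           + 3 * sqrt 2 * \<delta> * r"
proof -
  define m where "m = real n powr (1/3)"
  define N where "N = real n powr (2/3)"
  define s2 where "s2 = (2::real) powr (3/2)"
  define c where "c = s2 * m"
  define \<rho>m where "\<rho>m = 1/2 - r / m"
  define \<rho>p where "\<rho>p = 1/2 + r / m"
  let ?fm = "\<lambda>k. ereal (sm k)"
  let ?fp = "\<lambda>k. ereal (sp k)"
  let ?D = "Delta_n \<omega> b n"
  let ?Bm = "B_n \<omega> sm \<rho>m n"
  let ?Bp = "B_n \<omega> sp \<rho>p n"
  have mpos: "m > 0" using n unfolding m_def by simp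
  have NN: "N = m * m" unfolding N_def m_def using n by (simp add: powr_add[symmetric])
  have Npos: "N \<ge> 0" using NN by simp
  have s2v: "s2 = 2 * sqrt 2"
  proof -
    show ?thesis using powr_add[of "2::real" 1 "1/2"] unfolding s2_def by (simp add: powr_half_sqrt)
  qed
  have cpos: "c > 0" unfolding c_def using mpos s2v by simp
  define K where "K = \<lfloor>C * N\<rfloor>"
  have K0: "0 \<le> K" unfolding K_def using C Npos by simp
  have bninf: "\<forall>j. b j \<noteq> \<infinity>" and b0: "b 0 = 0" using b unfolding is_profile_def by auto
  have fmninf: "\<forall>j. ?fm j \<noteq> \<infinity>" and fpninf: "\<forall>j. ?fp j \<noteq> \<infinity>" by auto
  have fmfin: "Lb \<omega> ?fm (brk j n) \<noteq> -\<infinity>" for j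
    using Lb_in[where f="?fm" and \<omega>=\<omega> and x="brk j n", OF Cset_brk_fin] by auto
  have fpfin: "Lb \<omega> ?fp (brk j n) \<noteq> -\<infinity>" for j
    using Lb_in[where f="?fp" and \<omega>=\<omega> and x="brk j n", OF Cset_brk_fin] by auto
  have E1: "Zb \<omega> ?fm (brk K n) \<le> Zb \<omega> b (brk 0 n)" and E2: "Zb \<omega> b (brk K n) \<le> Zb \<omega> ?fp (brk 0 n)"
    using E unfolding K_def N_def brkr_def by auto
  have Zp0: "Zb \<omega> ?fp (brk 0 n) \<le> int n"
    using Zb_props(1)[where f="?fp" and \<omega>=\<omega> and x="brk 0 n", OF Cset_brk_fin] unfolding Cset_brk by auto
  have b0fin: "Lb \<omega> b (brk 0 n) \<noteq> -\<infinity>"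
  proof -
    have "0 \<in> Cset (brk 0 n)" unfolding Cset_brk by auto
    from Lb_ge[OF Cset_brk_fin(1) this, of b \<omega>] b0 show ?thesis by auto
  qed
  have bKfin: "Lb \<omega> b (brk K n) \<noteq> -\<infinity>"
  proof
    assume h: "Lb \<omega> b (brk K n) = -\<infinity>"
    have mem: "K + int n \<in> Cset (brk K n)" unfolding Cset_brk by auto
    have "b (K + int n) + ereal (Lk \<omega> (K + int n) (brk K n)) \<le> Lb \<omega> b (brk K n)"
      by (rule Lb_ge[OF Cset_brk_fin(1) mem])
    then have "b (K + int n) + ereal (Lk \<omega> (K + int n) (brk K n)) = Lb \<omega> b (brk K n)" using h by simp
    from Zb_max[OF Cset_brk_fin(1) mem this] E2 Zp0 have "K \<le> 0" by linarith
    then have "K = 0" using K0 by simp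
    then show False using h b0fin by simp
  qed
  have bfin: "Lb \<omega> b (brk j n) \<noteq> -\<infinity>" if j: "0 \<le> j" "j \<le> K" for j
  proof -
    define zK where "zK = Zb \<omega> b (brk K n)"
    have zK: "zK \<in> Cset (brk K n)" "b zK + ereal (Lk \<omega> zK (brk K n)) = Lb \<omega> b (brk K n)"
      using Zb_props[OF Cset_brk_fin] unfolding zK_def by auto
    obtain F where F: "b zK = ereal F" using ereal_fin[OF _ zK(2) bKfin] bninf by blast
    have "zK \<le> int n" using E2 Zp0 unfolding zK_def by linarith
    then have mem: "zK \<in> Cset (brk j n)" using zK(1) j unfolding Cset_brk by auto
    from Lb_ge[OF Cset_brk_fin(1) mem, of b \<omega>] F show ?thesis by auto
  qed
  have murm: "\<bar>mu \<rho>m\<bar> * N / c \<le> 3 * sqrt 2 * r"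
  proof -
    have "\<bar>mu \<rho>m\<bar> \<le> 32/3 * (r/m)"
      using mu_bound[of \<rho>m] rm r mpos unfolding \<rho>m_def m_def by simp
    from mu_scale[OF mpos s2v this r] show ?thesis unfolding NN c_def .
  qed
  have murp: "\<bar>mu \<rho>p\<bar> * N / c \<le> 3 * sqrt 2 * r"
  proof -
    have "\<bar>mu \<rho>p\<bar> \<le> 32/3 * (r/m)"
      using mu_bound[of \<rho>p] rp r mpos unfolding \<rho>p_def m_def by simp
    from mu_scale[OF mpos s2v this r] show ?thesis unfolding NN c_def .
  qed
  have key: "\<bar>?D u - ?D v\<bar> \<le> max \<bar>?Bm u - ?Bm v\<bar> \<bar>?Bp u - ?Bp v\<bar> + 3 * sqrt 2 * (v - u) * r"
    if uv: "0 \<le> u" "u \<le> v" "v \<le> C" for u v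
  proof -
    define k where "k = \<lfloor>u * N\<rfloor>"
    define l where "l = \<lfloor>v * N\<rfloor>"
    have k0: "0 \<le> k" unfolding k_def using uv Npos by simp
    have kl: "k \<le> l" unfolding k_def l_def using uv Npos by (intro floor_mono mult_right_mono) auto
    have lK: "l \<le> K" unfolding l_def K_def using uv Npos by (intro floor_mono mult_right_mono) auto
    have bk: "Lb \<omega> b (brk k n) \<noteq> -\<infinity>" using bfin k0 kl lK by simp
    have bl: "Lb \<omega> b (brk l n) \<noteq> -\<infinity>" using bfin k0 kl lK by simp
    have "Zb \<omega> ?fm (brk l n) \<le> Zb \<omega> ?fm (brk K n)" by (rule Z_mono[OF fmninf lK fmfin fmfin])
    also have "\<dots> \<le> Zb \<omega> b (brk 0 n)" by (rule E1)
    also have "\<dots> \<le> Zb \<omega> b (brk k n)" by (rule Z_mono[OF bninf k0 b0fin bk])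
    finally have Z1: "Zb \<omega> ?fm (brk l n) \<le> Zb \<omega> b (brk k n)" .
    have "Zb \<omega> b (brk l n) \<le> Zb \<omega> b (brk K n)" by (rule Z_mono[OF bninf lK bl bKfin])
    also have "\<dots> \<le> Zb \<omega> ?fp (brk 0 n)" by (rule E2)
    also have "\<dots> \<le> Zb \<omega> ?fp (brk k n)" by (rule Z_mono[OF fpninf k0 fpfin fpfin])
    finally have Z2: "Zb \<omega> b (brk l n) \<le> Zb \<omega> ?fp (brk k n)" .
    define Db where "Db = real_of_ereal (Lb \<omega> b (brk l n)) - real_of_ereal (Lb \<omega> b (brk k n))"
    define Dm where "Dm = real_of_ereal (Lb \<omega> ?fm (brk l n)) - real_of_ereal (Lb \<omega> ?fm (brk k n))"
    define Dp where "Dp = real_of_ereal (Lb \<omega> ?fp (brk l n)) - real_of_ereal (Lb \<omega> ?fp (brk k n))"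
    have c1: "Dm \<le> Db" unfolding Dm_def Db_def by (rule compare[OF bninf fmninf kl bk fmfin Z1])
    have c2: "Db \<le> Dp" unfolding Dp_def Db_def by (rule compare[OF fpninf bninf kl fpfin bl Z2])
    have eD: "?D v - ?D u = Db / c"
      unfolding Delta_n_def brkr_def Db_def c_def s2_def m_def k_def l_def N_def
      by (simp add: diff_divide_distrib)
    have eBm: "?Bm v - ?Bm u = Dm / c - mu \<rho>m * (v - u) * N / c"
      unfolding B_n_def brkr_def Dm_def c_def s2_def m_def k_def l_def N_def
      by (simp add: diff_divide_distrib add_divide_distrib algebra_simps)
    have eBp: "?Bp v - ?Bp u = Dp / c - mu \<rho>p * (v - u) * N / c"
      unfolding B_n_def brkr_def Dp_def c_def s2_def m_def k_def l_def N_def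
      by (simp add: diff_divide_distrib add_divide_distrib algebra_simps)
    have am: "\<bar>mu \<rho>m * (v - u) * N / c\<bar> \<le> 3 * sqrt 2 * (v - u) * r"
    proof -
      have "\<bar>mu \<rho>m * (v - u) * N / c\<bar> = (\<bar>mu \<rho>m\<bar> * N / c) * (v - u)"
        using uv Npos cpos by (simp add: abs_mult abs_divide)
      also have "\<dots> \<le> (3 * sqrt 2 * r) * (v - u)" using murm uv by (intro mult_right_mono) auto
      finally show ?thesis by (simp add: algebra_simps)
    qed
    have ap: "\<bar>mu \<rho>p * (v - u) * N / c\<bar> \<le> 3 * sqrt 2 * (v - u) * r"
    proof -
      have "\<bar>mu \<rho>p * (v - u) * N / c\<bar> = (\<bar>mu \<rho>p\<bar> * N / c) * (v - u)"
        using uv Npos cpos by (simp add: abs_mult abs_divide)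
      also have "\<dots> \<le> (3 * sqrt 2 * r) * (v - u)" using murp uv by (intro mult_right_mono) auto
      finally show ?thesis by (simp add: algebra_simps)
    qed
    have d1: "Dm / c \<le> Db / c" using c1 cpos by (simp add: divide_right_mono)
    have d2: "Db / c \<le> Dp / c" using c2 cpos by (simp add: divide_right_mono)
    have "\<bar>?D u - ?D v\<bar> = \<bar>Db / c\<bar>" using eD abs_minus_commute[of "?D u" "?D v"] by simp
    also have "\<dots> \<le> max \<bar>?Bm u - ?Bm v\<bar> \<bar>?Bp u - ?Bp v\<bar> + 3 * sqrt 2 * (v - u) * r"
      using d1 d2 eBm eBp am ap by (simp add: abs_minus_commute abs_le_iff max_def split: if_splits; linarith)
    finally show ?thesis .
  qed
  have bddm: "bdd_above {\<bar>?Bm u - ?Bm v\<bar> | u v. u \<in> {0..C} \<and> v \<in> {0..C} \<and> \<bar>u - v\<bar> \<le> \<delta>}"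
  proof -
    obtain M where M: "\<forall>u\<in>{0..C}. \<bar>(real_of_ereal (Lb \<omega> ?fm (brk \<lfloor>u*N\<rfloor> n)) - real_of_ereal (Lb \<omega> ?fm (brk 0 n)) - mu \<rho>m*u*N)/c\<bar> \<le> M"
      using B_bdd[where g="\<lambda>j. real_of_ereal (Lb \<omega> ?fm (brk j n))" and a="real_of_ereal (Lb \<omega> ?fm (brk 0 n))" and \<mu>="mu \<rho>m", OF Npos cpos C] by blast
    show ?thesis
      by (rule mod_bdd[of _ _ M]) (use M in \<open>simp add: B_n_def brkr_def N_def c_def s2_def m_def\<close>)
  qed
  have bddp: "bdd_above {\<bar>?Bp u - ?Bp v\<bar> | u v. u \<in> {0..C} \<and> v \<in> {0..C} \<and> \<bar>u - v\<bar> \<le> \<delta>}"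
  proof -
    obtain M where M: "\<forall>u\<in>{0..C}. \<bar>(real_of_ereal (Lb \<omega> ?fp (brk \<lfloor>u*N\<rfloor> n)) - real_of_ereal (Lb \<omega> ?fp (brk 0 n)) - mu \<rho>p*u*N)/c\<bar> \<le> M"
      using B_bdd[where g="\<lambda>j. real_of_ereal (Lb \<omega> ?fp (brk j n))" and a="real_of_ereal (Lb \<omega> ?fp (brk 0 n))" and \<mu>="mu \<rho>p", OF Npos cpos C] by blast
    show ?thesis
      by (rule mod_bdd[of _ _ M]) (use M in \<open>simp add: B_n_def brkr_def N_def c_def s2_def m_def\<close>)
  qed
  have K: "\<And>u v. u \<in> {0..C} \<Longrightarrow> v \<in> {0..C} \<Longrightarrow>
      \<bar>?D u - ?D v\<bar> \<le> max \<bar>?Bm u - ?Bm v\<bar> \<bar>?Bp u - ?Bp v\<bar> + (3 * sqrt 2 * r) * \<bar>u - v\<bar>"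
  proof -
    fix u v :: real assume u: "u \<in> {0..C}" and v: "v \<in> {0..C}"
    show "\<bar>?D u - ?D v\<bar> \<le> max \<bar>?Bm u - ?Bm v\<bar> \<bar>?Bp u - ?Bp v\<bar> + (3 * sqrt 2 * r) * \<bar>u - v\<bar>"
    proof (cases "u \<le> v")
      case True
      have "\<bar>u - v\<bar> = v - u" using True by simp
      then show ?thesis using key[of u v] u v True by (simp only: mult_ac) simp
    next
      case False
      have "\<bar>u - v\<bar> = u - v" using False by simp
      moreover have "\<bar>?D u - ?D v\<bar> = \<bar>?D v - ?D u\<bar>" by (rule abs_minus_commute)
      moreover have "\<bar>?Bm u - ?Bm v\<bar> = \<bar>?Bm v - ?Bm u\<bar>" by (rule abs_minus_commute)
      moreover have "\<bar>?Bp u - ?Bp v\<bar> = \<bar>?Bp v - ?Bp u\<bar>" by (rule abs_minus_commute)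
      ultimately show ?thesis using key[of v u] u v False by (simp only: mult_ac) simp
    qed
  qed
  have "modcont C ?D \<delta> \<le> max (modcont C ?Bm \<delta>) (modcont C ?Bp \<delta>) + (3 * sqrt 2 * r) * \<delta>"
    by (rule sup_combine[OF bddm bddp K]) (use r \<delta> in auto)
  then have "modcont C ?D \<delta> \<le> max (modcont C ?Bm \<delta>) (modcont C ?Bp \<delta>) + 3 * sqrt 2 * \<delta> * r"
    by (simp add: mult_ac)
  then show ?thesis unfolding \<rho>m_def \<rho>p_def m_def .
qed

end
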